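(* Suppose Assumptions A1, A3 and A4 hold. Let $\{w_k\}$ be generated by $w_{k+1}=w_k+p_k$, where $|S_k|=\beta$ and $p_k$ is any vector satisfying the residual condition $$\|\nabla^2R_{S_k}(w_k)p_k+\nabla R(w_k)\|\le\zeta\|\nabla R(w_k)\|$$ for a parameter $\zeta<1$. Then $$\mathbb{E}_k[\|w_{k+1}-w^*\|]\le\frac{M}{2\mu_\beta}\|w_k-w^*\|^2+\left(\frac{\sigma}{\mu_\beta\sqrt\beta}+\frac{L\zeta}{\mu_\beta}\right)\|w_k-w^*\|.$$ Consequently, if in addition Assumption B1 holds, $\beta\ge 64\sigma^2/\bar\mu^2$, $\zeta\le\frac{\mu_\beta}{8L}$, and $\|w_0-w^*\|\le\min\{\frac1{4C_1},\frac1{4\gamma C_1}\}$ with $C_1=\frac M{2\mu_\beta}$, then $\mathbb{E}[\|w_{k+1}-w^*\|]\le\frac12\mathbb{E}[\|w_k-w^*\|]$ for all $k\ge0$.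
   Context: Setting (finite sum): $R(w)=\frac1N\sum_{i=1}^NF_i(w)$ for $w\in\mathbb{R}^d$, each $F_i$ twice continuously differentiable. For an index multiset $S$, $\nabla^2R_S(w)=\frac1{|S|}\sum_{i\in S}\nabla^2F_i(w)$. At each iteration $S_k$ consists of $\beta$ indices drawn independently and uniformly from $\{1,\dots,N\}$, independent of the past; the full gradient $\nabla R(w_k)$ is used. $\mathbb{E}_k$ is expectation over $S_k$ conditional on $w_k$. $w^*$ is the unique minimizer of $R$. Assumption A1 (for $R$): for every positive integer $\beta$ there are $0<\mu_\beta\le L_\beta$ with $\mu_\beta I\preceq\nabla^2R_S(w)\preceq L_\beta I$ for all $w$ and all $|S|=\beta$; constants $0<\bar\mu\le\mu_\beta$, $L_\beta\le\bar L<\infty$; and $\mu I\preceq\nabla^2R(w)\preceq LI$ for all $w$. Assumption A3: $\|\nabla^2R(w)-\nabla^2R(z)\|\le M\|w-z\|$ for all $w,z$. Assumption A4: with $i$ uniform on $\{1,\dots,N\}$, $\|\mathbb{E}[(\nabla^2F_i(w)-\nabla^2R(w))^2]\|\le\sigma^2$ for all $w$. Assumption B1: there is $\gamma>0$ such that every iterate satisfies $\mathbb{E}[\|w_k-w^*\|^2]\le\gamma(\mathbb{E}[\|w_k-w^*\|])^2$. *)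

theory Defs
  imports "HOL-Analysis.Analysis" "HOL-Probability.Probability"
begin

text \<open>Indices of the component functions are 0, ..., N-1.
  A sample S of size beta is a list of beta indices (a multiset with order);
  the uniform distribution on such lists is exactly beta i.i.d. uniform draws.\<close>

definition samples :: "nat \<Rightarrow> nat \<Rightarrow> nat list set" where
  "samples N \<beta> = {S. length S = \<beta> \<and> set S \<subseteq> {..<N}}"

text \<open>Histories (S_{k-1}, ..., S_0) of k independent samples, newest first.\<close>
definition histories :: "nat \<Rightarrow> nat \<Rightarrow> nat \<Rightarrow> nat list list set" where
  "histories N \<beta> k = {h. length h = k \<and> set h \<subseteq> samples N \<beta>}"

definition Exp :: "'a set \<Rightarrow> ('a \<Rightarrow> real) \<Rightarrow> real" where
  "Exp A f = measure_pmf.expectation (pmf_of_set A) f"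

text \<open>Average over all N components, e.g. R, its gradient, its Hessian.\<close>
definition favg :: "nat \<Rightarrow> (nat \<Rightarrow> 'b::real_vector) \<Rightarrow> 'b" where
  "favg N f = (1 / real N) *\<^sub>R (\<Sum>i<N. f i)"

definition subHess :: "(nat \<Rightarrow> 'x \<Rightarrow> real^'n^'n) \<Rightarrow> nat list \<Rightarrow> 'x \<Rightarrow> real^'n^'n" where
  "subHess H S w = (1 / real (length S)) *\<^sub>R sum_list (map (\<lambda>i. H i w) S)"

definition loewner_le :: "real^'n^'n \<Rightarrow> real^'n^'n \<Rightarrow> bool" where
  "loewner_le A B \<longleftrightarrow> (\<forall>x. x \<bullet> (A *v x) \<le> x \<bullet> (B *v x))"

definition opnorm :: "real^'n^'n \<Rightarrow> real" where
  "opnorm A = onorm (\<lambda>x. A *v x)"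

text \<open>Iterates: w_0 = w0, w_{k+1} = w_k + p_k, where the step p may depend on the
  whole history h of previous samples and on the current sample S.\<close>
primrec traj :: "'v::real_vector \<Rightarrow> ('s list \<Rightarrow> 's \<Rightarrow> 'v) \<Rightarrow> 's list \<Rightarrow> 'v" where
  "traj w0 p [] = w0"
| "traj w0 p (S # h) = traj w0 p h + p h S"

end

theory Submission imports Defs begin

lemma mv_bl: "bounded_linear (\<lambda>x. (A::real^'n^'n) *v x)"
  by (simp add: matrix_vector_mul_linear linear_conv_bounded_linear)

lemma opnorm_bound: "norm ((A::real^'n^'n) *v x) \<le> opnorm A * norm x"
  unfolding opnorm_def using onorm[OF mv_bl] by blast

lemma opnorm_nonneg: "0 \<le> opnorm (A::real^'n^'n)"
  unfolding opnorm_def using onorm_pos_le[OF mv_bl] by blast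

lemma mv_sum: "(sum f I) *v (x::real^'n) = (\<Sum>i\<in>I. (f i::real^'n^'n) *v x)"
proof (induction I rule: infinite_finite_induct)
  case (infinite A) then show ?case by simp
next
  case empty then show ?case by (simp add: matrix_vector_mult_0)
next
  case (insert a F) then show ?case by (simp add: matrix_vector_mult_add_rdistrib)
qed

lemma favg_mv: "favg N f *v (x::real^'n) = favg N (\<lambda>i. (f i::real^'n^'n) *v x)"
  unfolding favg_def by (simp add: mv_sum scaleR_matrix_vector_assoc[symmetric])

lemma sum_list_mv: "sum_list (map f S) *v (x::real^'n) = sum_list (map (\<lambda>i. (f i::real^'n^'n) *v x) S)"
  by (induction S) (simp_all add: matrix_vector_mult_0 matrix_vector_mult_add_rdistrib)

lemma loewner_lower: "loewner_le (c *\<^sub>R mat 1) A \<Longrightarrow> c * (norm x)^2 \<le> x \<bullet> ((A::real^'n^'n) *v x)"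
  unfolding loewner_le_def
  by (metis inner_scaleR_right matrix_vector_mul_lid power2_norm_eq_inner scaleR_matrix_vector_assoc)

lemma loewner_upper: "loewner_le A (c *\<^sub>R mat 1) \<Longrightarrow> x \<bullet> ((A::real^'n^'n) *v x) \<le> c * (norm x)^2"
  unfolding loewner_le_def
  by (metis inner_scaleR_right matrix_vector_mul_lid power2_norm_eq_inner scaleR_matrix_vector_assoc)

lemma loewner_norm: assumes "0 < c" "loewner_le (c *\<^sub>R mat 1) A"
  shows "c * norm x \<le> norm ((A::real^'n^'n) *v x)"
proof (cases "x = 0")
  case True then show ?thesis by simp
next
  case False
  have "c * (norm x)^2 \<le> x \<bullet> (A *v x)" by (rule loewner_lower[OF assms(2)])
  also have "\<dots> \<le> norm x * norm (A *v x)" by (rule norm_cauchy_schwarz)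
  finally have "norm x * (c * norm x) \<le> norm x * norm (A *v x)" by (simp add: power2_eq_square algebra_simps)
  then show ?thesis using False by simp
qed

definition symm :: "real^'n^'n \<Rightarrow> bool" where
  "symm B \<longleftrightarrow> (\<forall>x y. x \<bullet> (B *v y) = y \<bullet> (B *v x))"

lemma symm_norm_bound:
  assumes s: "symm B" and q: "\<And>x. \<bar>x \<bullet> (B *v x)\<bar> \<le> K * (norm x)^2"
  shows "norm ((B::real^'n^'n) *v x) \<le> K * norm x"
proof -
  have pol: "4 * (z \<bullet> (B *v x)) \<le> 2 * K * ((norm x)^2 + (norm z)^2)" for z
  proof -
    have "4 * (z \<bullet> (B *v x)) = (x+z) \<bullet> (B *v (x+z)) - (x-z) \<bullet> (B *v (x-z))"
      using s unfolding symm_def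
      by (simp add: matrix_vector_right_distrib matrix_vector_mult_diff_distrib inner_add_left inner_add_right inner_diff_left inner_diff_right)
    also have "\<dots> \<le> K * (norm (x+z))^2 + K * (norm (x-z))^2"
      using q[of "x+z"] q[of "x-z"] by linarith
    also have "\<dots> = 2 * K * ((norm x)^2 + (norm z)^2)"
      by (simp add: power2_norm_eq_inner inner_add_left inner_add_right inner_diff_left inner_diff_right inner_commute algebra_simps)
    finally show ?thesis .
  qed
  show ?thesis
  proof (cases "B *v x = 0")
    case True
    have "0 \<le> K * (norm x)^2" using q[of x] by simp
    then have "0 \<le> K * norm x"
      by (cases "x = 0") (auto simp: zero_le_mult_iff)
    then show ?thesis using True by simp
  next
    case False
    define z where "z = (norm x / norm (B *v x)) *\<^sub>R (B *v x)"
    have nz: "norm z = norm x" using False by (simp add: z_def)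
    have "z \<bullet> (B *v x) = norm x * norm (B *v x)"
      using False by (simp add: z_def power2_norm_eq_inner[symmetric] power2_eq_square)
    with pol[of z] nz have "4 * (norm x * norm (B *v x)) \<le> 4 * K * (norm x)^2" by simp
    then have "norm x * norm (B *v x) \<le> norm x * (K * norm x)" by (simp add: power2_eq_square algebra_simps)
    moreover have "x \<noteq> 0" using False by auto
    ultimately show ?thesis by simp
  qed
qed


lemma line_deriv_f:
  assumes d: "\<And>p. (f has_derivative (\<lambda>v. G p \<bullet> v)) (at p)"
  shows "((\<lambda>s. f (a + s *\<^sub>R x)) has_real_derivative (G (a + s *\<^sub>R x) \<bullet> x)) (at s)"
proof -
  have l: "((\<lambda>s. a + s *\<^sub>R x) has_derivative (\<lambda>d. d *\<^sub>R x)) (at s)"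
    by (auto intro!: derivative_eq_intros)
  have "((f \<circ> (\<lambda>s. a + s *\<^sub>R x)) has_derivative ((\<lambda>v. G (a + s *\<^sub>R x) \<bullet> v) \<circ> (\<lambda>d. d *\<^sub>R x))) (at s)"
    by (rule diff_chain_at[OF l d])
  then have "((\<lambda>s. f (a + s *\<^sub>R x)) has_derivative (\<lambda>v. G (a + s *\<^sub>R x) \<bullet> (v *\<^sub>R x))) (at s)"
    by (simp add: o_def)
  then show ?thesis unfolding has_field_derivative_def
    by (rule has_derivative_eq_rhs) (simp add: fun_eq_iff mult.commute)
qed

lemma line_deriv_g:
  assumes d: "\<And>p. (g has_derivative (\<lambda>v. (Hm p::real^'n^'n) *v v)) (at p)"
  shows "((\<lambda>t. g (a + t *\<^sub>R y) \<bullet> x) has_real_derivative ((Hm (a + t *\<^sub>R y) *v y) \<bullet> x)) (at t)"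
proof -
  have l: "((\<lambda>s. a + s *\<^sub>R y) has_derivative (\<lambda>d. d *\<^sub>R y)) (at t)"
    by (auto intro!: derivative_eq_intros)
  have "((g \<circ> (\<lambda>s. a + s *\<^sub>R y)) has_derivative ((\<lambda>v. Hm (a + t *\<^sub>R y) *v v) \<circ> (\<lambda>d. d *\<^sub>R y))) (at t)"
    by (rule diff_chain_at[OF l d])
  then have "((\<lambda>s. g (a + s *\<^sub>R y)) has_derivative (\<lambda>d. d *\<^sub>R (Hm (a + t *\<^sub>R y) *v y))) (at t)"
    by (simp add: o_def matrix_scaleR_vector_ac scaleR_matrix_vector_assoc)
  then have "((\<lambda>s. g (a + s *\<^sub>R y) \<bullet> x) has_derivative (\<lambda>d. d *\<^sub>R (Hm (a + t *\<^sub>R y) *v y) \<bullet> x)) (at t)"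
    by (auto intro!: derivative_eq_intros)
  then show ?thesis unfolding has_field_derivative_def
    by (rule has_derivative_eq_rhs) (simp add: fun_eq_iff mult.commute)
qed

lemma hess_step:
  assumes df: "\<And>p. (f has_derivative (\<lambda>v. G p \<bullet> v)) (at p)"
    and dg: "\<And>p. (G has_derivative (\<lambda>v. (Hm p::real^'n^'n) *v v)) (at p)"
    and h: "0 < h"
  shows "\<exists>z. norm (z - w) \<le> h * (norm x + norm y) \<and>
     f (w + h *\<^sub>R x + h *\<^sub>R y) - f (w + h *\<^sub>R x) - f (w + h *\<^sub>R y) + f w = h * (h * ((Hm z *v y) \<bullet> x))"
proof -
  define a where "a s = f ((w + h *\<^sub>R y) + s *\<^sub>R x) - f (w + s *\<^sub>R x)" for s
  have "\<And>s. (a has_real_derivative (G ((w + h *\<^sub>R y) + s *\<^sub>R x) \<bullet> x - G (w + s *\<^sub>R x) \<bullet> x)) (at s)"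
    unfolding a_def by (intro derivative_intros line_deriv_f[OF df])
  from MVT2[OF h this] obtain \<xi> where xi: "0 < \<xi>" "\<xi> < h"
    and eq1: "a h - a 0 = (h - 0) * (G ((w + h *\<^sub>R y) + \<xi> *\<^sub>R x) \<bullet> x - G (w + \<xi> *\<^sub>R x) \<bullet> x)"
    by blast
  define b where "b t = G ((w + \<xi> *\<^sub>R x) + t *\<^sub>R y) \<bullet> x" for t
  have "\<And>t. (b has_real_derivative ((Hm ((w + \<xi> *\<^sub>R x) + t *\<^sub>R y) *v y) \<bullet> x)) (at t)"
    unfolding b_def by (rule line_deriv_g[OF dg])
  from MVT2[OF h this] obtain \<eta> where eta: "0 < \<eta>" "\<eta> < h"
    and eq2: "b h - b 0 = (h - 0) * ((Hm ((w + \<xi> *\<^sub>R x) + \<eta> *\<^sub>R y) *v y) \<bullet> x)"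
    by blast
  define z where "z = (w + \<xi> *\<^sub>R x) + \<eta> *\<^sub>R y"
  have "norm (z - w) \<le> norm (\<xi> *\<^sub>R x) + norm (\<eta> *\<^sub>R y)"
    unfolding z_def by (metis add_diff_cancel_left' add.assoc norm_triangle_ineq)
  also have "\<dots> \<le> h * norm x + h * norm y"
    using xi eta by (intro add_mono) (auto intro: mult_right_mono)
  finally have nz: "norm (z - w) \<le> h * (norm x + norm y)" by (simp add: algebra_simps)
  have "a h - a 0 = f (w + h *\<^sub>R x + h *\<^sub>R y) - f (w + h *\<^sub>R x) - f (w + h *\<^sub>R y) + f w"
    unfolding a_def by (simp add: algebra_simps)
  moreover have "b h - b 0 = G ((w + h *\<^sub>R y) + \<xi> *\<^sub>R x) \<bullet> x - G (w + \<xi> *\<^sub>R x) \<bullet> x"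
    unfolding b_def by (simp add: algebra_simps)
  ultimately have "f (w + h *\<^sub>R x + h *\<^sub>R y) - f (w + h *\<^sub>R x) - f (w + h *\<^sub>R y) + f w = h * (h * ((Hm z *v y) \<bullet> x))"
    using eq1 eq2 unfolding z_def by simp
  with nz show ?thesis by blast
qed

lemma cont_form: "continuous_on UNIV Hm \<Longrightarrow> continuous_on UNIV (\<lambda>z. ((Hm z::real^'n^'n) *v y) \<bullet> x)"
proof -
  assume c: "continuous_on UNIV Hm"
  have "linear (\<lambda>A::real^'n^'n. A *v y)"
    by (rule linearI) (simp_all add: matrix_vector_mult_add_rdistrib scaleR_matrix_vector_assoc)
  then have "bounded_linear (\<lambda>A::real^'n^'n. A *v y)" by (simp add: linear_conv_bounded_linear)
  then have "continuous_on UNIV (\<lambda>z. Hm z *v y)"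
    using bounded_linear.continuous_on c by blast
  then show ?thesis by (intro continuous_intros)
qed

lemma hess_symm:
  assumes df: "\<And>p. (f has_derivative (\<lambda>v. G p \<bullet> v)) (at p)"
    and dg: "\<And>p. (G has_derivative (\<lambda>v. (Hm p::real^'n^'n) *v v)) (at p)"
    and c: "continuous_on UNIV Hm"
  shows "symm (Hm w)"
  unfolding symm_def
proof (intro allI, rule ccontr)
  fix x y :: "real^'n"
  define \<phi> where "\<phi> z = (Hm z *v y) \<bullet> x" for z
  define \<psi> where "\<psi> z = (Hm z *v x) \<bullet> y" for z
  assume ne: "x \<bullet> (Hm w *v y) \<noteq> y \<bullet> (Hm w *v x)"
  then have ne': "\<phi> w \<noteq> \<psi> w" unfolding \<phi>_def \<psi>_def by (simp add: inner_commute)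
  define d where "d = \<bar>\<phi> w - \<psi> w\<bar>"
  have d: "0 < d" using ne' by (simp add: d_def)
  have c1: "isCont \<phi> w" using cont_form[OF c, of y x] unfolding \<phi>_def
    by (simp add: continuous_on_eq_continuous_at)
  have c2: "isCont \<psi> w" using cont_form[OF c, of x y] unfolding \<psi>_def
    by (simp add: continuous_on_eq_continuous_at)
  obtain \<delta>1 where d1: "\<delta>1 > 0" "\<And>z. dist z w < \<delta>1 \<Longrightarrow> dist (\<phi> z) (\<phi> w) < d/2"
    using c1[unfolded continuous_at_eps_delta] d by (metis half_gt_zero)
  obtain \<delta>2 where d2: "\<delta>2 > 0" "\<And>z. dist z w < \<delta>2 \<Longrightarrow> dist (\<psi> z) (\<psi> w) < d/2"
    using c2[unfolded continuous_at_eps_delta] d by (metis half_gt_zero)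
  define h where "h = min \<delta>1 \<delta>2 / (2 * (norm x + norm y + 1))"
  have hpos: "0 < h" unfolding h_def using d1 d2 by (simp add: add_nonneg_pos)
  have pos: "0 < 2 * (norm x + norm y + 1)" by (simp add: add_nonneg_pos)
  have hb: "h * (norm x + norm y) < min \<delta>1 \<delta>2"
  proof -
    have "h * (norm x + norm y) < h * (2 * (norm x + norm y + 1))"
      using hpos by (intro mult_strict_left_mono) (auto simp: add_nonneg_pos add_pos_nonneg)
    also have "\<dots> = min \<delta>1 \<delta>2" unfolding h_def using pos by simp
    finally show ?thesis .
  qed
  obtain z1 where z1: "norm (z1 - w) \<le> h * (norm x + norm y)"
    "f (w + h *\<^sub>R x + h *\<^sub>R y) - f (w + h *\<^sub>R x) - f (w + h *\<^sub>R y) + f w = h * (h * \<phi> z1)"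
    using hess_step[OF df dg hpos, of w x y] unfolding \<phi>_def by blast
  obtain z2 where z2: "norm (z2 - w) \<le> h * (norm y + norm x)"
    "f (w + h *\<^sub>R y + h *\<^sub>R x) - f (w + h *\<^sub>R y) - f (w + h *\<^sub>R x) + f w = h * (h * \<psi> z2)"
    using hess_step[OF df dg hpos, of w y x] unfolding \<psi>_def by blast
  have "h * (h * \<phi> z1) = h * (h * \<psi> z2)" using z1(2) z2(2) by (simp add: algebra_simps)
  then have eq: "\<phi> z1 = \<psi> z2" using hpos by simp
  have "dist z1 w < \<delta>1" using z1(1) hb by (simp add: dist_norm)
  then have e1: "\<bar>\<phi> z1 - \<phi> w\<bar> < d/2" using d1(2) by (simp add: dist_real_def)
  have "dist z2 w < \<delta>2" using z2(1) hb by (simp add: dist_norm add.commute)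
  then have e2: "\<bar>\<psi> z2 - \<psi> w\<bar> < d/2" using d2(2) by (simp add: dist_real_def)
  from e1 e2 eq have "\<bar>\<phi> w - \<psi> w\<bar> < d" by linarith
  then show False by (simp add: d_def)
qed


lemma line_mvt:
  assumes dg: "\<And>p. (G has_derivative (\<lambda>v. (Hm p::real^'n^'n) *v v)) (at p)"
  shows "\<exists>\<xi>. 0 < \<xi> \<and> \<xi> < 1 \<and> G (a + e) \<bullet> c - G a \<bullet> c = (Hm (a + \<xi> *\<^sub>R e) *v e) \<bullet> c"
proof -
  have "\<And>t. ((\<lambda>t. G (a + t *\<^sub>R e) \<bullet> c) has_real_derivative ((Hm (a + t *\<^sub>R e) *v e) \<bullet> c)) (at t)"
    by (rule line_deriv_g[OF dg])
  from MVT2[OF zero_less_one this] show ?thesis by auto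
qed

lemma taylor_bound:
  assumes dg: "\<And>p. (G has_derivative (\<lambda>v. (Hm p::real^'n^'n) *v v)) (at p)"
    and lip: "\<And>w z. opnorm (Hm w - Hm z) \<le> M * norm (w - z)"
    and g0: "G ws = 0"
  shows "norm (G w - Hm w *v (w - ws)) \<le> M / 2 * (norm (w - ws))^2"
proof (cases "G w - Hm w *v (w - ws) = 0")
  case True
  have "0 \<le> M"
  proof -
    obtain u :: "real^'n" where "u \<noteq> 0" using zero_neq_one[where 'a="real^'n"] by blast
    have "0 \<le> opnorm (Hm u - Hm 0)" by (rule opnorm_nonneg)
    also have "\<dots> \<le> M * norm u" using lip[of u 0] by simp
    finally show ?thesis using \<open>u \<noteq> 0\<close> by (simp add: zero_le_mult_iff)
  qed
  then show ?thesis using True by simp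
next
  case False
  define e where "e = w - ws"
  define v where "v = G w - Hm w *v e"
  define c where "c = (1 / norm v) *\<^sub>R v"
  have nc: "norm c = 1" using False by (simp add: c_def v_def e_def)
  define K where "K = M * (norm e)^2"
  define chi where "chi t = G (ws + t *\<^sub>R e) \<bullet> c - t * ((Hm w *v e) \<bullet> c) + K * (1 - t)^2 / 2" for t
  have d: "(chi has_real_derivative ((Hm (ws + t *\<^sub>R e) *v e) \<bullet> c - (Hm w *v e) \<bullet> c - K * (1 - t))) (at t)" for t
    unfolding chi_def
    by (auto intro!: derivative_eq_intros line_deriv_g[OF dg] simp: field_simps power2_eq_square)
  from MVT2[OF zero_less_one d] obtain \<xi> where xi: "0 < \<xi>" "\<xi> < 1"
    and eq: "chi 1 - chi 0 = (1 - 0) * ((Hm (ws + \<xi> *\<^sub>R e) *v e) \<bullet> c - (Hm w *v e) \<bullet> c - K * (1 - \<xi>))"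
    by blast
  define z where "z = ws + \<xi> *\<^sub>R e"
  have zw: "z - w = (\<xi> - 1) *\<^sub>R e" unfolding z_def e_def by (simp add: algebra_simps)
  have "(Hm z *v e) \<bullet> c - (Hm w *v e) \<bullet> c = ((Hm z - Hm w) *v e) \<bullet> c"
    by (simp add: matrix_vector_mult_diff_rdistrib inner_diff_left)
  also have "\<dots> \<le> norm ((Hm z - Hm w) *v e) * norm c" by (rule norm_cauchy_schwarz)
  also have "\<dots> = norm ((Hm z - Hm w) *v e)" using nc by simp
  also have "\<dots> \<le> opnorm (Hm z - Hm w) * norm e" by (rule opnorm_bound)
  also have "\<dots> \<le> M * norm (z - w) * norm e" by (rule mult_right_mono[OF lip]) simp
  also have "\<dots> = K * (1 - \<xi>)" unfolding zw K_def using xi by (simp add: power2_eq_square)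
  finally have "chi 1 - chi 0 \<le> 0" using eq unfolding z_def by simp
  then have "G w \<bullet> c - (Hm w *v e) \<bullet> c \<le> K / 2"
    unfolding chi_def using g0 by (simp add: e_def)
  moreover have "G w \<bullet> c - (Hm w *v e) \<bullet> c = v \<bullet> c"
    unfolding v_def by (simp add: inner_diff_left)
  moreover have "v \<bullet> c = norm v"
    unfolding c_def by (simp add: power2_norm_eq_inner[symmetric] power2_eq_square)
  ultimately show ?thesis unfolding v_def K_def e_def by simp
qed

lemma strong_mono:
  assumes dg: "\<And>p. (G has_derivative (\<lambda>v. (Hm p::real^'n^'n) *v v)) (at p)"
    and lo: "\<And>p. loewner_le (\<mu> *\<^sub>R mat 1) (Hm p)"
  shows "\<mu> * (norm (w - ws))^2 \<le> (G w - G ws) \<bullet> (w - ws)"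
proof -
  obtain \<xi> where "G (ws + (w - ws)) \<bullet> (w - ws) - G ws \<bullet> (w - ws) = (Hm (ws + \<xi> *\<^sub>R (w - ws)) *v (w - ws)) \<bullet> (w - ws)"
    using line_mvt[OF dg, of ws "w - ws" "w - ws"] by blast
  moreover have "\<mu> * (norm (w - ws))^2 \<le> (w - ws) \<bullet> (Hm (ws + \<xi> *\<^sub>R (w - ws)) *v (w - ws))"
    by (rule loewner_lower[OF lo])
  moreover have "(G w - G ws) \<bullet> (w - ws) = G w \<bullet> (w - ws) - G ws \<bullet> (w - ws)" by (rule inner_diff_left)
  moreover have "(w - ws) \<bullet> (Hm (ws + \<xi> *\<^sub>R (w - ws)) *v (w - ws)) = (Hm (ws + \<xi> *\<^sub>R (w - ws)) *v (w - ws)) \<bullet> (w - ws)"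
    by (rule inner_commute)
  moreover have "ws + (w - ws) = w" by simp
  ultimately show ?thesis by metis
qed

lemma grad_bound:
  assumes dg: "\<And>p. (G has_derivative (\<lambda>v. (Hm p::real^'n^'n) *v v)) (at p)"
    and nb: "\<And>p x. norm (Hm p *v x) \<le> L * norm x"
    and g0: "G ws = 0"
  shows "norm (G w) \<le> L * norm (w - ws)"
proof (cases "G w = 0")
  case True
  have "0 \<le> L"
  proof -
    obtain u :: "real^'n" where u: "u \<noteq> 0" using zero_neq_one[where 'a="real^'n"] by blast
    have "0 \<le> L * norm u" using nb[of ws u] norm_ge_zero[of "Hm ws *v u"] by linarith
    then show ?thesis using u by (simp add: zero_le_mult_iff)
  qed
  then show ?thesis using True by simp
next
  case False
  define c where "c = (1 / norm (G w)) *\<^sub>R G w"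
  obtain \<xi> where eq: "G (ws + (w - ws)) \<bullet> c - G ws \<bullet> c = (Hm (ws + \<xi> *\<^sub>R (w - ws)) *v (w - ws)) \<bullet> c"
    using line_mvt[OF dg, of ws "w - ws" c] by blast
  have gc: "G w \<bullet> c = norm (G w)" unfolding c_def
    by (simp add: power2_norm_eq_inner[symmetric] power2_eq_square)
  have "norm (G w) = (Hm (ws + \<xi> *\<^sub>R (w - ws)) *v (w - ws)) \<bullet> c" using eq g0 gc by simp
  also have "\<dots> \<le> norm (Hm (ws + \<xi> *\<^sub>R (w - ws)) *v (w - ws)) * norm c" by (rule norm_cauchy_schwarz)
  also have "\<dots> \<le> L * norm (w - ws)" using False nb by (simp add: c_def)
  finally show ?thesis .
qed


definition ll :: "'a set \<Rightarrow> nat \<Rightarrow> 'a list set" where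
  "ll A k = {xs. length xs = k \<and> set xs \<subseteq> A}"

lemma samples_ll: "samples N b = ll {..<N} b" unfolding samples_def ll_def by simp
lemma histories_ll: "histories N b k = ll (samples N b) k" unfolding histories_def ll_def by simp

lemma ll_0: "ll A 0 = {[]}" unfolding ll_def by auto

lemma ll_finite: "finite A \<Longrightarrow> finite (ll A k)"
  unfolding ll_def using finite_lists_length_eq[of A k] by (simp add: conj_commute)

lemma ll_card: "finite A \<Longrightarrow> card (ll A k) = card A ^ k"
  unfolding ll_def using card_lists_length_eq[of A k] by (simp add: conj_commute)

lemma ll_ne: "A \<noteq> {} \<Longrightarrow> ll A k \<noteq> {}"
proof -
  assume "A \<noteq> {}" then obtain a where "a \<in> A" by blast
  then have "replicate k a \<in> ll A k" unfolding ll_def by auto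
  then show ?thesis by blast
qed

lemma ll_Suc: "ll A (Suc k) = (\<lambda>(x, xs). x # xs) ` (A \<times> ll A k)"
proof
  show "ll A (Suc k) \<subseteq> (\<lambda>(x, xs). x # xs) ` (A \<times> ll A k)"
  proof
    fix ys assume "ys \<in> ll A (Suc k)"
    then obtain x xs where "ys = x # xs" "x \<in> A" "xs \<in> ll A k"
      unfolding ll_def by (cases ys) auto
    then show "ys \<in> (\<lambda>(x, xs). x # xs) ` (A \<times> ll A k)" by force
  qed
next
  show "(\<lambda>(x, xs). x # xs) ` (A \<times> ll A k) \<subseteq> ll A (Suc k)" unfolding ll_def by auto
qed

lemma ll_sum: "(\<Sum>ys\<in>ll A (Suc k). f ys) = (\<Sum>x\<in>A. \<Sum>xs\<in>ll A k. f (x # xs))"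
proof -
  have inj: "inj_on (\<lambda>(x, xs). x # xs) (A \<times> ll A k)" by (auto simp: inj_on_def)
  have "(\<Sum>ys\<in>ll A (Suc k). f ys) = sum (f \<circ> (\<lambda>(x, xs). x # xs)) (A \<times> ll A k)"
    unfolding ll_Suc by (rule sum.reindex[OF inj])
  also have "\<dots> = (\<Sum>(x,xs)\<in>A \<times> ll A k. f (x # xs))"
    apply (rule sum.cong[OF refl])
    apply (clarsimp simp: o_def)
    done
  also have "\<dots> = (\<Sum>x\<in>A. \<Sum>xs\<in>ll A k. f (x # xs))"
    by (rule sum.cartesian_product[symmetric])
  finally show ?thesis .
qed

lemma Exp_fin: "finite A \<Longrightarrow> A \<noteq> {} \<Longrightarrow> Exp A f = (\<Sum>x\<in>A. f x) / real (card A)"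
  unfolding Exp_def by (rule integral_pmf_of_set)

lemma Exp_ll_Suc:
  assumes "finite A" "A \<noteq> {}"
  shows "Exp (ll A (Suc k)) f = Exp (ll A k) (\<lambda>xs. Exp A (\<lambda>x. f (x # xs)))"
proof -
  have fl: "finite (ll A k)" "ll A k \<noteq> {}" "finite (ll A (Suc k))" "ll A (Suc k) \<noteq> {}"
    using assms ll_finite[of A] ll_ne[of A] by blast+
  have cA: "real (card A) > 0" using assms by (simp add: card_gt_0_iff)
  have "Exp (ll A (Suc k)) f = (\<Sum>x\<in>A. \<Sum>xs\<in>ll A k. f (x # xs)) / (real (card A) * real (card A) ^ k)"
    using fl assms by (simp add: Exp_fin ll_sum ll_card)
  also have "\<dots> = (\<Sum>xs\<in>ll A k. (\<Sum>x\<in>A. f (x # xs)) / real (card A)) / real (card A) ^ k"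
    using cA by (simp add: sum.swap[of _ A] sum_divide_distrib[symmetric] field_simps)
  also have "\<dots> = Exp (ll A k) (\<lambda>xs. Exp A (\<lambda>x. f (x # xs)))"
    using fl assms by (simp add: Exp_fin ll_card)
  finally show ?thesis .
qed

lemma Exp_mono: "finite A \<Longrightarrow> A \<noteq> {} \<Longrightarrow> (\<And>x. x \<in> A \<Longrightarrow> f x \<le> g x) \<Longrightarrow> Exp A f \<le> Exp A g"
  by (simp add: Exp_fin sum_mono divide_right_mono)

lemma Exp_lin: "finite A \<Longrightarrow> A \<noteq> {} \<Longrightarrow> Exp A (\<lambda>x. a * f x + b * g x) = a * Exp A f + b * Exp A g"
  by (simp add: Exp_fin sum.distrib sum_distrib_left[symmetric] add_divide_distrib)

lemma Exp_const: "finite A \<Longrightarrow> A \<noteq> {} \<Longrightarrow> Exp A (\<lambda>x. c) = c"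
  by (simp add: Exp_fin)

lemma Exp_sqrt: assumes "finite A" "A \<noteq> {}"
  shows "Exp A f \<le> sqrt (Exp A (\<lambda>x. (f x)^2))"
proof -
  have n: "real (card A) > 0" using assms by (simp add: card_gt_0_iff)
  have "(\<Sum>x\<in>A. f x * 1)^2 \<le> (\<Sum>x\<in>A. (f x)^2) * (\<Sum>x\<in>A. 1^2)"
    by (rule Cauchy_Schwarz_ineq_sum)
  then have "(\<Sum>x\<in>A. f x)^2 \<le> (\<Sum>x\<in>A. (f x)^2) * real (card A)" by simp
  then have "((\<Sum>x\<in>A. f x) / real (card A))^2 \<le> (\<Sum>x\<in>A. (f x)^2) / real (card A)"
    using n by (simp add: power_divide field_simps power2_eq_square)
  then have "(Exp A f)^2 \<le> Exp A (\<lambda>x. (f x)^2)" using assms by (simp add: Exp_fin)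
  then show ?thesis using real_le_rsqrt by blast
qed

lemma var_sum:
  fixes D :: "nat \<Rightarrow> real^'n"
  assumes z: "(\<Sum>i<N. D i) = 0"
  shows "real N * (\<Sum>S\<in>samples N b. (norm (sum_list (map D S)))^2)
         = real b * real N ^ b * (\<Sum>i<N. (norm (D i))^2)"
proof (induction b)
  case 0 then show ?case by (simp add: samples_ll ll_0)
next
  case (Suc b)
  let ?v = "\<lambda>S. sum_list (map D S)"
  let ?A = "samples N b"
  have fA: "finite ?A" by (simp add: samples_ll ll_finite)
  have cA: "card ?A = N ^ b" by (simp add: samples_ll ll_card)
  have "(\<Sum>S\<in>samples N (Suc b). (norm (?v S))^2) = (\<Sum>i<N. \<Sum>S\<in>?A. (norm (D i + ?v S))^2)"
    unfolding samples_ll by (subst ll_sum) simp_all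
  also have "\<dots> = (\<Sum>i<N. \<Sum>S\<in>?A. (norm (D i))^2 + 2 * (D i \<bullet> ?v S) + (norm (?v S))^2)"
    by (simp add: power2_norm_eq_inner inner_add_left inner_add_right inner_commute algebra_simps)
  also have "\<dots> = (\<Sum>i<N. real (N ^ b) * (norm (D i))^2) + 2 * ((\<Sum>i<N. D i) \<bullet> (\<Sum>S\<in>?A. ?v S))
      + real N * (\<Sum>S\<in>?A. (norm (?v S))^2)"
    using sum.swap[where A="{..<N}" and B="?A" and g="\<lambda>i S. D i \<bullet> ?v S"]
    by (simp add: sum.distrib cA sum_distrib_left[symmetric] inner_sum_left inner_sum_right)
  also have "\<dots> = real N ^ b * (\<Sum>i<N. (norm (D i))^2) + real b * real N ^ b * (\<Sum>i<N. (norm (D i))^2)"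
    using Suc z by (simp add: sum_distrib_left)
  finally have "(\<Sum>S\<in>samples N (Suc b). (norm (?v S))^2) = real (Suc b) * real N ^ b * (\<Sum>i<N. (norm (D i))^2)"
    by (simp add: algebra_simps)
  then show ?case by (simp add: algebra_simps)
qed


lemma favg_inner: "x \<bullet> favg N f = (1 / real N) * (\<Sum>i<N. x \<bullet> f i)"
  by (simp add: favg_def inner_sum_right)

lemma symm_diff: "symm A \<Longrightarrow> symm B \<Longrightarrow> symm (A - B)"
  unfolding symm_def by (simp add: matrix_vector_mult_diff_rdistrib inner_diff_right)

lemma symm_favg: "(\<And>i. i < N \<Longrightarrow> symm (B i)) \<Longrightarrow> symm (favg N B)"
  unfolding symm_def by (auto simp: favg_mv favg_inner intro!: sum.cong)

lemma sum_list_minus: "sum_list (map (\<lambda>i. f i - c) S) = sum_list (map f S) - real (length S) *\<^sub>R (c::'a::real_vector)"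
  by (induction S) (simp_all add: algebra_simps)

lemma Exp_cmult: "finite A \<Longrightarrow> A \<noteq> {} \<Longrightarrow> Exp A (\<lambda>x. c * f x) = c * Exp A f"
  by (simp add: Exp_fin sum_distrib_left[symmetric])

lemma Exp_add: "finite A \<Longrightarrow> A \<noteq> {} \<Longrightarrow> Exp A (\<lambda>x. f x + g x) = Exp A f + Exp A g"
  by (simp add: Exp_fin sum.distrib add_divide_distrib)

lemma Exp_single: "Exp {a} f = f a"
  by (simp add: Exp_fin)

lemma Exp_nonneg: "finite A \<Longrightarrow> A \<noteq> {} \<Longrightarrow> (\<And>x. x \<in> A \<Longrightarrow> 0 \<le> f x) \<Longrightarrow> 0 \<le> Exp A f"
  by (simp add: Exp_fin sum_nonneg)


theorem mainTheorem7:
  fixes N \<beta> :: nat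
    and F :: "nat \<Rightarrow> real^'n \<Rightarrow> real"
    and g :: "nat \<Rightarrow> real^'n \<Rightarrow> real^'n"
    and H :: "nat \<Rightarrow> real^'n \<Rightarrow> real^'n^'n"
    and mu Lb :: "nat \<Rightarrow> real"
    and mubar Lbar \<mu> L M \<sigma> \<zeta> \<gamma> :: real
    and wstar w0 :: "real^'n"
    and p :: "nat list list \<Rightarrow> nat list \<Rightarrow> real^'n"
  assumes N_pos: "N \<ge> 1" and beta_pos: "\<beta> \<ge> 1"
    and grad: "\<And>i w. i < N \<Longrightarrow> (F i has_derivative (\<lambda>v. g i w \<bullet> v)) (at w)"
    and hess: "\<And>i w. i < N \<Longrightarrow> (g i has_derivative (\<lambda>v. H i w *v v)) (at w)"
    and hess_cont: "\<And>i. i < N \<Longrightarrow> continuous_on UNIV (H i)"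
    and wstar_min: "\<And>w. favg N (\<lambda>i. F i wstar) \<le> favg N (\<lambda>i. F i w)"
    and wstar_unique: "\<And>z. (\<forall>w. favg N (\<lambda>i. F i z) \<le> favg N (\<lambda>i. F i w)) \<Longrightarrow> z = wstar"
    \<comment> \<open>Assumption A1\<close>
    and A1_sub: "\<And>b S w. b \<ge> 1 \<Longrightarrow> S \<in> samples N b \<Longrightarrow>
        0 < mu b \<and> mu b \<le> Lb b \<and> mubar \<le> mu b \<and> Lb b \<le> Lbar \<and>
        loewner_le (mu b *\<^sub>R mat 1) (subHess H S w) \<and> loewner_le (subHess H S w) (Lb b *\<^sub>R mat 1)"
    and A1_bar: "0 < mubar" "mubar \<le> Lbar"
    and A1_full: "0 < \<mu>" "\<mu> \<le> L"
      "\<And>w. loewner_le (\<mu> *\<^sub>R mat 1) (favg N (\<lambda>i. H i w))"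
      "\<And>w. loewner_le (favg N (\<lambda>i. H i w)) (L *\<^sub>R mat 1)"
    \<comment> \<open>Assumption A3\<close>
    and A3: "\<And>w z. opnorm (favg N (\<lambda>i. H i w) - favg N (\<lambda>i. H i z)) \<le> M * norm (w - z)"
    \<comment> \<open>Assumption A4\<close>
    and sigma_nonneg: "0 \<le> \<sigma>"
    and A4: "\<And>w. opnorm (favg N (\<lambda>i. (H i w - favg N (\<lambda>j. H j w)) ** (H i w - favg N (\<lambda>j. H j w))))
                  \<le> \<sigma>\<^sup>2"
    \<comment> \<open>residual condition on the steps\<close>
    and zeta_lt: "\<zeta> < 1"
    and residual: "\<And>h S. set h \<subseteq> samples N \<beta> \<Longrightarrow> S \<in> samples N \<beta> \<Longrightarrow>
        norm (subHess H S (traj w0 p h) *v p h S + favg N (\<lambda>i. g i (traj w0 p h)))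
          \<le> \<zeta> * norm (favg N (\<lambda>i. g i (traj w0 p h)))"
  shows
    "(\<forall>k. \<forall>h\<in>histories N \<beta> k.
        Exp (samples N \<beta>) (\<lambda>S. norm (traj w0 p (S # h) - wstar))
          \<le> M / (2 * mu \<beta>) * (norm (traj w0 p h - wstar))\<^sup>2
            + (\<sigma> / (mu \<beta> * sqrt (real \<beta>)) + L * \<zeta> / mu \<beta>) * norm (traj w0 p h - wstar))
     \<and>
     ((0 < \<gamma> \<and>
       (\<forall>k. Exp (histories N \<beta> k) (\<lambda>h. (norm (traj w0 p h - wstar))\<^sup>2)
              \<le> \<gamma> * (Exp (histories N \<beta> k) (\<lambda>h. norm (traj w0 p h - wstar)))\<^sup>2) \<and>
       real \<beta> \<ge> 64 * \<sigma>\<^sup>2 / mubar\<^sup>2 \<and>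
       \<zeta> \<le> mu \<beta> / (8 * L) \<and>
       4 * (M / (2 * mu \<beta>)) * norm (w0 - wstar) \<le> 1 \<and>
       4 * \<gamma> * (M / (2 * mu \<beta>)) * norm (w0 - wstar) \<le> 1)
      \<longrightarrow> (\<forall>k. Exp (histories N \<beta> (Suc k)) (\<lambda>h. norm (traj w0 p h - wstar))
                 \<le> 1 / 2 * Exp (histories N \<beta> k) (\<lambda>h. norm (traj w0 p h - wstar))))"
proof -
  define gb where "gb w = favg N (\<lambda>i. g i w)" for w
  define Hb where "Hb w = favg N (\<lambda>i. H i w)" for w
  have Npos: "real N > 0" using N_pos by simp
  have dR: "((\<lambda>w. favg N (\<lambda>i. F i w)) has_derivative (\<lambda>v. gb w \<bullet> v)) (at w)" for w
  proof -
    have "((\<lambda>w. (1 / real N) *\<^sub>R (\<Sum>i<N. F i w)) has_derivative (\<lambda>v. (1 / real N) *\<^sub>R (\<Sum>i<N. g i w \<bullet> v))) (at w)"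
      by (intro has_derivative_scaleR_right has_derivative_sum grad) simp
    then show ?thesis unfolding favg_def gb_def
      by (rule has_derivative_eq_rhs) (simp add: fun_eq_iff inner_sum_left)
  qed
  have dg: "(gb has_derivative (\<lambda>v. Hb w *v v)) (at w)" for w
  proof -
    have "((\<lambda>w. (1 / real N) *\<^sub>R (\<Sum>i<N. g i w)) has_derivative (\<lambda>v. (1 / real N) *\<^sub>R (\<Sum>i<N. H i w *v v))) (at w)"
      by (intro has_derivative_scaleR_right has_derivative_sum hess) simp
    then show ?thesis unfolding gb_def Hb_def favg_def[of N "\<lambda>i. g i _"] favg_mv
      by (rule has_derivative_eq_rhs) (simp add: fun_eq_iff favg_mv favg_def)
  qed
  have g0: "gb wstar = 0"
  proof -
    have "(\<lambda>v. gb wstar \<bullet> v) = (\<lambda>h. 0)"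
      by (rule has_derivative_local_min[OF dR]) (simp add: wstar_min)
    then have "gb wstar \<bullet> gb wstar = 0" by meson
    then show ?thesis by simp
  qed
  have symH: "symm (H i w)" if "i < N" for i w
    by (rule hess_symm[of "F i" "g i" "H i"]) (use that grad hess hess_cont in auto)
  have symHb: "symm (Hb w)" for w
    unfolding Hb_def by (rule symm_favg) (rule symH)
  have Hb_norm: "norm (Hb w *v x) \<le> L * norm x" for w x
  proof (rule symm_norm_bound[OF symHb])
    fix y :: "real^'n"
    have "\<mu> * (norm y)^2 \<le> y \<bullet> (Hb w *v y)" unfolding Hb_def by (rule loewner_lower[OF A1_full(3)])
    moreover have "y \<bullet> (Hb w *v y) \<le> L * (norm y)^2" unfolding Hb_def by (rule loewner_upper[OF A1_full(4)])
    moreover have "0 \<le> \<mu> * (norm y)^2" using A1_full(1) by simp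
    ultimately show "\<bar>y \<bullet> (Hb w *v y)\<bar> \<le> L * (norm y)^2" by linarith
  qed
  have lipHb: "opnorm (Hb w - Hb z) \<le> M * norm (w - z)" for w z
    unfolding Hb_def by (rule A3)
  have taylor: "norm (gb w - Hb w *v (w - wstar)) \<le> M / 2 * (norm (w - wstar))^2" for w
    by (rule taylor_bound[OF dg lipHb g0])
  have gbound: "norm (gb w) \<le> L * norm (w - wstar)" for w
    by (rule grad_bound[OF dg Hb_norm g0])
  have gzero: "w = wstar" if "gb w = 0" for w
  proof -
    have "\<mu> * (norm (w - wstar))^2 \<le> (gb w - gb wstar) \<bullet> (w - wstar)"
      by (rule strong_mono[OF dg]) (simp add: Hb_def A1_full(3))
    then have "\<mu> * (norm (w - wstar))^2 \<le> 0" using that g0 by simp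
    then show ?thesis using A1_full(1) by (simp add: mult_le_0_iff)
  qed
  have M0: "0 \<le> M"
  proof -
    obtain u :: "real^'n" where "u \<noteq> 0" using zero_neq_one[where 'a="real^'n"] by blast
    have "0 \<le> opnorm (Hb u - Hb 0)" by (rule opnorm_nonneg)
    also have "\<dots> \<le> M * norm u" using lipHb[of u 0] by simp
    finally show ?thesis using \<open>u \<noteq> 0\<close> by (simp add: zero_le_mult_iff)
  qed
  have bpos: "real \<beta> > 0" using beta_pos by simp
  define SA where "SA = samples N \<beta>"
  have SAf: "finite SA" "SA \<noteq> {}" unfolding SA_def samples_ll
    using N_pos ll_ne[of "{..<N}" \<beta>] ll_finite[of "{..<N}" \<beta>] lessThan_empty_iff[of N] by auto
  have S0: "replicate \<beta> 0 \<in> SA" unfolding SA_def samples_def using N_pos by auto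
  have mub: "0 < mu \<beta>" "mubar \<le> mu \<beta>" using A1_sub[OF beta_pos S0[unfolded SA_def]] by auto
  have lowA: "mu \<beta> * norm x \<le> norm (subHess H S w *v x)" if "S \<in> SA" for S w x
    using A1_sub[OF beta_pos that[unfolded SA_def]] by (intro loewner_norm) auto
  have var: "Exp SA (\<lambda>S. norm ((subHess H S w - Hb w) *v x)) \<le> \<sigma> / sqrt (real \<beta>) * norm x" for w x
  proof -
    define D where "D i = (H i w - Hb w) *v x" for i
    define v where "v S = sum_list (map D S)" for S
    have Dsum: "(\<Sum>i<N. D i) = 0"
    proof -
      have "(\<Sum>i<N. D i) = (\<Sum>i<N. H i w *v x) - real N *\<^sub>R (Hb w *v x)"
        by (simp add: D_def matrix_vector_mult_diff_rdistrib sum_subtractf sum_constant_scaleR del: sum_constant)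
      also have "Hb w *v x = (1 / real N) *\<^sub>R (\<Sum>i<N. H i w *v x)"
        unfolding Hb_def favg_mv by (simp add: favg_def)
      finally show ?thesis using Npos by simp
    qed
    have eqS: "(subHess H S w - Hb w) *v x = (1 / real \<beta>) *\<^sub>R v S" if "S \<in> SA" for S
    proof -
      have len: "length S = \<beta>" using that by (simp add: SA_def samples_def)
      have "v S = sum_list (map (\<lambda>i. H i w *v x) S) - real \<beta> *\<^sub>R (Hb w *v x)"
        unfolding v_def D_def using len by (simp add: matrix_vector_mult_diff_rdistrib sum_list_minus)
      then have "(1 / real \<beta>) *\<^sub>R v S = (1 / real \<beta>) *\<^sub>R sum_list (map (\<lambda>i. H i w *v x) S) - ((1 / real \<beta>) * real \<beta>) *\<^sub>R (Hb w *v x)"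
        by (simp only: scaleR_diff_right scaleR_scaleR)
      also have "(1 / real \<beta>) * real \<beta> = 1" using bpos by simp
      finally have "(1 / real \<beta>) *\<^sub>R v S = (1 / real \<beta>) *\<^sub>R sum_list (map (\<lambda>i. H i w *v x) S) - Hb w *v x"
        by simp
      also have "\<dots> = (subHess H S w - Hb w) *v x"
        unfolding subHess_def len
        by (simp add: matrix_vector_mult_diff_rdistrib scaleR_matrix_vector_assoc[symmetric] sum_list_mv)
      finally show ?thesis by simp
    qed
    have sumD: "(\<Sum>i<N. (norm (D i))^2) \<le> real N * (\<sigma>^2 * (norm x)^2)"
    proof -
      define B where "B i = H i w - Hb w" for i
      have sB: "symm (B i)" if "i < N" for i unfolding B_def using that by (intro symm_diff symH symHb)
      have "(\<Sum>i<N. (norm (D i))^2) = (\<Sum>i<N. x \<bullet> ((B i ** B i) *v x))"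
      proof (rule sum.cong[OF refl])
        fix i assume "i \<in> {..<N}"
        then have "x \<bullet> (B i *v (B i *v x)) = (B i *v x) \<bullet> (B i *v x)"
          using sB unfolding symm_def by auto
        then show "(norm (D i))^2 = x \<bullet> ((B i ** B i) *v x)"
          by (simp add: D_def B_def[symmetric] power2_norm_eq_inner matrix_vector_mul_assoc)
      qed
      also have "\<dots> = real N * (x \<bullet> (favg N (\<lambda>i. B i ** B i) *v x))"
        using Npos by (simp add: favg_mv favg_inner)
      also have "\<dots> \<le> real N * (\<sigma>^2 * (norm x)^2)"
      proof (rule mult_left_mono)
        have "x \<bullet> (favg N (\<lambda>i. B i ** B i) *v x) \<le> norm x * norm (favg N (\<lambda>i. B i ** B i) *v x)"
          by (rule norm_cauchy_schwarz)
        also have "\<dots> \<le> norm x * (opnorm (favg N (\<lambda>i. B i ** B i)) * norm x)"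
          by (intro mult_left_mono opnorm_bound) simp
        also have "\<dots> \<le> norm x * (\<sigma>^2 * norm x)"
          using A4[of w] unfolding B_def Hb_def by (intro mult_left_mono mult_right_mono) auto
        finally show "x \<bullet> (favg N (\<lambda>i. B i ** B i) *v x) \<le> \<sigma>^2 * (norm x)^2"
          by (simp add: power2_eq_square algebra_simps)
      qed simp
      finally show ?thesis .
    qed
    have Ev2: "Exp SA (\<lambda>S. (norm (v S))^2) \<le> real \<beta> * (\<sigma>^2 * (norm x)^2)"
    proof -
      have cs: "card SA = N ^ \<beta>" unfolding SA_def samples_ll by (simp add: ll_card)
      have "Exp SA (\<lambda>S. (norm (v S))^2) = (\<Sum>S\<in>SA. (norm (v S))^2) / real N ^ \<beta>"
        using SAf cs by (simp add: Exp_fin)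
      also have "(\<Sum>S\<in>SA. (norm (v S))^2) = real \<beta> * real N ^ \<beta> * (\<Sum>i<N. (norm (D i))^2) / real N"
        using var_sum[OF Dsum, of \<beta>] Npos unfolding SA_def v_def by (simp add: field_simps)
      finally have "Exp SA (\<lambda>S. (norm (v S))^2) = real \<beta> * ((\<Sum>i<N. (norm (D i))^2) / real N)"
        using Npos by simp
      also have "\<dots> \<le> real \<beta> * (\<sigma>^2 * (norm x)^2)"
        using sumD Npos by (intro mult_left_mono) (simp_all add: field_simps)
      finally show ?thesis .
    qed
    have "Exp SA (\<lambda>S. norm ((subHess H S w - Hb w) *v x)) = Exp SA (\<lambda>S. (1 / real \<beta>) * norm (v S))"
      unfolding Exp_fin[OF SAf] using eqS bpos by (intro arg_cong2[where f="(/)"] sum.cong) auto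
    also have "\<dots> = (1 / real \<beta>) * Exp SA (\<lambda>S. norm (v S))" by (rule Exp_cmult[OF SAf])
    also have "\<dots> \<le> (1 / real \<beta>) * sqrt (Exp SA (\<lambda>S. (norm (v S))^2))"
      using Exp_sqrt[OF SAf] bpos by (intro mult_left_mono) auto
    also have "\<dots> \<le> (1 / real \<beta>) * sqrt (real \<beta> * (\<sigma>^2 * (norm x)^2))"
      using Ev2 bpos by (intro mult_left_mono real_sqrt_le_mono) auto
    also have "\<dots> = \<sigma> / sqrt (real \<beta>) * norm x"
      using bpos sigma_nonneg by (simp add: real_sqrt_mult field_simps real_sqrt_divide)
    finally show ?thesis .
  qed
  have step: "norm (traj w0 p (S # h) - wstar) \<le> (1 / mu \<beta>) *
      (norm ((subHess H S (traj w0 p h) - Hb (traj w0 p h)) *v (traj w0 p h - wstar))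
       + (M / 2 * (norm (traj w0 p h - wstar))^2 + L * \<zeta> * norm (traj w0 p h - wstar)))"
    if hS: "set h \<subseteq> samples N \<beta>" "S \<in> SA" for h S
  proof -
    define w where "w = traj w0 p h"
    define e where "e = w - wstar"
    define A where "A = subHess H S w"
    define r where "r = A *v p h S + gb w"
    have res: "norm r \<le> \<zeta> * norm (gb w)"
      using residual[OF hS(1) hS(2)[unfolded SA_def]] unfolding r_def A_def w_def gb_def .
    have zg: "\<zeta> * norm (gb w) \<le> L * \<zeta> * norm e"
    proof (cases "\<zeta> \<ge> 0")
      case True
      then have "\<zeta> * norm (gb w) \<le> \<zeta> * (L * norm e)"
        using gbound[of w] unfolding e_def by (intro mult_left_mono) auto
      then show ?thesis by (simp add: algebra_simps)
    next
      case False
      have "0 \<le> \<zeta> * norm (gb w)" using res norm_ge_zero[of r] by linarith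
      then have "norm (gb w) \<le> 0" using False by (simp add: zero_le_mult_iff)
      then have g: "gb w = 0" by simp
      then have "w = wstar" by (rule gzero)
      then show ?thesis using g by (simp add: e_def)
    qed
    have u: "traj w0 p (S # h) - wstar = e + p h S" by (simp add: w_def e_def)
    have Au: "A *v (e + p h S) = ((A - Hb w) *v e + (Hb w *v e - gb w)) + r"
      by (simp add: r_def matrix_vector_right_distrib matrix_vector_mult_diff_rdistrib algebra_simps)
    have "mu \<beta> * norm (e + p h S) \<le> norm (A *v (e + p h S))" unfolding A_def by (rule lowA[OF hS(2)])
    also have "\<dots> \<le> norm ((A - Hb w) *v e) + norm (Hb w *v e - gb w) + norm r"
      unfolding Au
      using norm_triangle_ineq[of "(A - Hb w) *v e + (Hb w *v e - gb w)" r]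
        norm_triangle_ineq[of "(A - Hb w) *v e" "Hb w *v e - gb w"] by linarith
    also have "\<dots> \<le> norm ((A - Hb w) *v e) + (M / 2 * (norm e)^2 + L * \<zeta> * norm e)"
      using taylor[of w] res zg norm_minus_commute[of "Hb w *v e" "gb w"] unfolding e_def by linarith
    finally have "mu \<beta> * norm (e + p h S) \<le> norm ((A - Hb w) *v e) + (M / 2 * (norm e)^2 + L * \<zeta> * norm e)" .
    then have "norm (e + p h S) \<le> (1 / mu \<beta>) * (norm ((A - Hb w) *v e) + (M / 2 * (norm e)^2 + L * \<zeta> * norm e))"
      using mub(1) by (simp add: field_simps)
    then show ?thesis unfolding u A_def e_def w_def .
  qed
  have part1: "Exp SA (\<lambda>S. norm (traj w0 p (S # h) - wstar))
     \<le> M / (2 * mu \<beta>) * (norm (traj w0 p h - wstar))\<^sup>2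
       + (\<sigma> / (mu \<beta> * sqrt (real \<beta>)) + L * \<zeta> / mu \<beta>) * norm (traj w0 p h - wstar)"
    if hS: "set h \<subseteq> samples N \<beta>" for h
  proof -
    define w where "w = traj w0 p h"
    define K where "K = M / 2 * (norm (w - wstar))^2 + L * \<zeta> * norm (w - wstar)"
    have "Exp SA (\<lambda>S. norm (traj w0 p (S # h) - wstar))
        \<le> Exp SA (\<lambda>S. (1 / mu \<beta>) * (norm ((subHess H S w - Hb w) *v (w - wstar)) + K))"
      by (rule Exp_mono[OF SAf]) (unfold w_def K_def, rule step[OF hS])
    also have "\<dots> = (1 / mu \<beta>) * (Exp SA (\<lambda>S. norm ((subHess H S w - Hb w) *v (w - wstar))) + K)"
      by (subst Exp_cmult[OF SAf], subst Exp_add[OF SAf], simp only: Exp_const[OF SAf])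
    also have "\<dots> \<le> (1 / mu \<beta>) * (\<sigma> / sqrt (real \<beta>) * norm (w - wstar) + K)"
      using var[of w "w - wstar"] mub(1) by (intro mult_left_mono add_right_mono) auto
    also have "\<dots> = M / (2 * mu \<beta>) * (norm (w - wstar))\<^sup>2
       + (\<sigma> / (mu \<beta> * sqrt (real \<beta>)) + L * \<zeta> / mu \<beta>) * norm (w - wstar)"
      unfolding K_def using mub(1) by (simp add: field_simps)
    finally show ?thesis unfolding w_def .
  qed
  have P1: "\<forall>k. \<forall>h\<in>histories N \<beta> k.
        Exp (samples N \<beta>) (\<lambda>S. norm (traj w0 p (S # h) - wstar))
          \<le> M / (2 * mu \<beta>) * (norm (traj w0 p h - wstar))\<^sup>2
            + (\<sigma> / (mu \<beta> * sqrt (real \<beta>)) + L * \<zeta> / mu \<beta>) * norm (traj w0 p h - wstar)"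
    using part1 unfolding SA_def histories_def by auto
  define a where "a k = Exp (histories N \<beta> k) (\<lambda>h. norm (traj w0 p h - wstar))" for k
  define b where "b k = Exp (histories N \<beta> k) (\<lambda>h. (norm (traj w0 p h - wstar))^2)" for k
  define C1 where "C1 = M / (2 * mu \<beta>)"
  define c where "c = \<sigma> / (mu \<beta> * sqrt (real \<beta>)) + L * \<zeta> / mu \<beta>"
  have HAf: "finite (histories N \<beta> k)" "histories N \<beta> k \<noteq> {}" for k
    unfolding histories_ll using SAf ll_ne[of SA k] ll_finite[of SA k] unfolding SA_def by auto
  have a0: "a 0 = norm (w0 - wstar)" unfolding a_def histories_ll ll_0 by (simp add: Exp_single)
  have anonneg: "0 \<le> a k" for k unfolding a_def by (rule Exp_nonneg[OF HAf]) simp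
  have C1nn: "0 \<le> C1" unfolding C1_def using M0 mub(1) by simp
  have rec: "a (Suc k) \<le> C1 * b k + c * a k" for k
  proof -
    have "a (Suc k) = Exp (histories N \<beta> k) (\<lambda>h. Exp SA (\<lambda>S. norm (traj w0 p (S # h) - wstar)))"
      unfolding a_def histories_ll SA_def using SAf unfolding SA_def by (simp add: Exp_ll_Suc)
    also have "\<dots> \<le> Exp (histories N \<beta> k) (\<lambda>h. C1 * (norm (traj w0 p h - wstar))\<^sup>2 + c * norm (traj w0 p h - wstar))"
      by (rule Exp_mono[OF HAf]) (unfold C1_def c_def, rule part1, auto simp: histories_def)
    also have "\<dots> = C1 * b k + c * a k" unfolding a_def b_def by (rule Exp_lin[OF HAf])
    finally show ?thesis .
  qed
  have P2: "(0 < \<gamma> \<and>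
       (\<forall>k. Exp (histories N \<beta> k) (\<lambda>h. (norm (traj w0 p h - wstar))\<^sup>2)
              \<le> \<gamma> * (Exp (histories N \<beta> k) (\<lambda>h. norm (traj w0 p h - wstar)))\<^sup>2) \<and>
       real \<beta> \<ge> 64 * \<sigma>\<^sup>2 / mubar\<^sup>2 \<and>
       \<zeta> \<le> mu \<beta> / (8 * L) \<and>
       4 * (M / (2 * mu \<beta>)) * norm (w0 - wstar) \<le> 1 \<and>
       4 * \<gamma> * (M / (2 * mu \<beta>)) * norm (w0 - wstar) \<le> 1)
      \<longrightarrow> (\<forall>k. Exp (histories N \<beta> (Suc k)) (\<lambda>h. norm (traj w0 p h - wstar))
                 \<le> 1 / 2 * Exp (histories N \<beta> k) (\<lambda>h. norm (traj w0 p h - wstar)))"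
  proof (intro impI)
    assume hyp: "0 < \<gamma> \<and>
       (\<forall>k. Exp (histories N \<beta> k) (\<lambda>h. (norm (traj w0 p h - wstar))\<^sup>2)
              \<le> \<gamma> * (Exp (histories N \<beta> k) (\<lambda>h. norm (traj w0 p h - wstar)))\<^sup>2) \<and>
       real \<beta> \<ge> 64 * \<sigma>\<^sup>2 / mubar\<^sup>2 \<and>
       \<zeta> \<le> mu \<beta> / (8 * L) \<and>
       4 * (M / (2 * mu \<beta>)) * norm (w0 - wstar) \<le> 1 \<and>
       4 * \<gamma> * (M / (2 * mu \<beta>)) * norm (w0 - wstar) \<le> 1"
    have gam: "0 < \<gamma>" using hyp by blast
    have B1: "b k \<le> \<gamma> * (a k)^2" for k using hyp unfolding a_def b_def by blast
    have Lpos: "0 < L" using A1_full(1,2) by simp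
    have c1: "\<sigma> / (mu \<beta> * sqrt (real \<beta>)) \<le> 1 / 8"
    proof -
      have "64 * \<sigma>\<^sup>2 / mubar\<^sup>2 \<le> real \<beta>" using hyp by blast
      then have "sqrt (64 * \<sigma>\<^sup>2 / mubar\<^sup>2) \<le> sqrt (real \<beta>)" by (rule real_sqrt_le_mono)
      moreover have "sqrt (64 * \<sigma>\<^sup>2 / mubar\<^sup>2) = 8 * \<sigma> / mubar"
        using sigma_nonneg A1_bar(1) by (simp add: real_sqrt_mult real_sqrt_divide)
      ultimately have "8 * \<sigma> / mubar \<le> sqrt (real \<beta>)" by simp
      then have "8 * \<sigma> \<le> sqrt (real \<beta>) * mubar" using A1_bar(1) by (simp add: pos_divide_le_eq)
      then have "8 * \<sigma> \<le> mubar * sqrt (real \<beta>)" by (simp add: mult.commute)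
      also have "\<dots> \<le> mu \<beta> * sqrt (real \<beta>)" using mub(2) by (intro mult_right_mono) auto
      finally have "8 * \<sigma> \<le> mu \<beta> * sqrt (real \<beta>)" .
      moreover have "0 < mu \<beta> * sqrt (real \<beta>)" using mub(1) bpos by simp
      ultimately show ?thesis by (simp add: field_simps)
    qed
    have c2: "L * \<zeta> / mu \<beta> \<le> 1 / 8"
    proof -
      have "\<zeta> \<le> mu \<beta> / (8 * L)" using hyp by blast
      then have "L * \<zeta> \<le> L * (mu \<beta> / (8 * L))" using Lpos by (intro mult_left_mono) auto
      then have "L * \<zeta> \<le> mu \<beta> / 8" using Lpos by simp
      then show ?thesis using mub(1) by (simp add: field_simps)
    qed
    have cq: "c \<le> 1 / 4" unfolding c_def using c1 c2 by linarith
    have ce0: "C1 * \<gamma> * a 0 \<le> 1 / 4" using hyp unfolding C1_def a0 by (simp add: algebra_simps)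
    have half: "a (Suc k) \<le> 1 / 2 * a k" if "a k \<le> a 0" for k
    proof -
      have "C1 * \<gamma> * a k \<le> C1 * \<gamma> * a 0" using that C1nn gam by (intro mult_left_mono) auto
      then have q: "C1 * \<gamma> * a k \<le> 1 / 4" using ce0 by linarith
      have "a (Suc k) \<le> C1 * b k + c * a k" by (rule rec)
      also have "\<dots> \<le> C1 * (\<gamma> * (a k)^2) + c * a k" using B1 C1nn by (intro add_right_mono mult_left_mono) auto
      also have "\<dots> = (C1 * \<gamma> * a k) * a k + c * a k" by (simp add: power2_eq_square algebra_simps)
      also have "\<dots> \<le> 1 / 4 * a k + 1 / 4 * a k"
        using q cq anonneg[of k] by (intro add_mono mult_right_mono) auto
      finally show ?thesis by simp
    qed
    have le0: "a k \<le> a 0" for k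
    proof (induction k)
      case 0 then show ?case by simp
    next
      case (Suc k)
      then show ?case using half[OF Suc] anonneg[of k] by linarith
    qed
    show "\<forall>k. Exp (histories N \<beta> (Suc k)) (\<lambda>h. norm (traj w0 p h - wstar))
                 \<le> 1 / 2 * Exp (histories N \<beta> k) (\<lambda>h. norm (traj w0 p h - wstar))"
      using half[OF le0] unfolding a_def by blast
  qed
  show ?thesis using P1 P2 by blast
qed

end
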